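(* The generating function $\sum_{n\ge0}2^{n(n+3)/2}x^n$ (sequence $1,4,32,512,16384,\dots$) has, as formal power series, the Jacobi continued fraction expansion $$\sum_{n\ge0}2^{n(n+3)/2}x^n=\cfrac{1}{1-\beta_0x-\cfrac{\lambda_1x^2}{1-\beta_1x-\cfrac{\lambda_2x^2}{1-\beta_2x-\cdots}}},\qquad \beta_n=2^{n+1}(2^{n+1}+2^{n}-1),\ \ \lambda_n=2^{3n+1}(2^{n}-1),$$ (so $\beta_0,\beta_1,\beta_2,\dots=4,20,88,368,\dots$ and $\lambda_1,\lambda_2,\dots=16,384,7168,\dots$), and equivalently the Stieltjes continued fraction expansion $$\sum_{n\ge0}2^{n(n+3)/2}x^n=\cfrac{1}{1-\cfrac{b(0)x}{1-\cfrac{b(1)x}{1-\cfrac{b(2)x}{1-\cdots}}}},\qquad b(n)=2^{n+2}-2^{(n+1)/2}\bigl(1-(-1)^n\bigr)\ (n\ge0),$$ so that $b(0),b(1),b(2),\dots=4,4,16,24,64,\dots$. *)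

theory Defs
  imports "HOL-Computational_Algebra.Formal_Power_Series"
begin

text \<open>Truncated Jacobi continued fraction denominators.
  jden b l k m is the formal power series
  1 - b k X - l (k+1) X^2 / (1 - b (k+1) X - ... - l (k+m) X^2 / (1 - b (k+m) X)),
  i.e. the tail of the J-fraction starting at level k, truncated after m further levels.\<close>
fun jden :: "(nat \<Rightarrow> 'a::field) \<Rightarrow> (nat \<Rightarrow> 'a) \<Rightarrow> nat \<Rightarrow> nat \<Rightarrow> 'a fps" where
  "jden b l k 0 = 1 - fps_const (b k) * fps_X"
| "jden b l k (Suc m) = 1 - fps_const (b k) * fps_X
      - fps_const (l (Suc k)) * fps_X ^ 2 * inverse (jden b l (Suc k) m)"

definition jconv :: "(nat \<Rightarrow> 'a::field) \<Rightarrow> (nat \<Rightarrow> 'a) \<Rightarrow> nat \<Rightarrow> 'a fps" where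
  "jconv b l N = inverse (jden b l 0 N)"

fun sden :: "(nat \<Rightarrow> 'a::field) \<Rightarrow> nat \<Rightarrow> nat \<Rightarrow> 'a fps" where
  "sden a k 0 = 1 - fps_const (a k) * fps_X"
| "sden a k (Suc m) = 1 - fps_const (a k) * fps_X * inverse (sden a (Suc k) m)"

definition sconv :: "(nat \<Rightarrow> 'a::field) \<Rightarrow> nat \<Rightarrow> 'a fps" where
  "sconv a N = inverse (sden a 0 N)"

text \<open>An infinite continued fraction equals f as formal power series iff its convergents
  converge to f in the (x-adic) topology of formal power series.\<close>
definition has_jfrac :: "'a::field fps \<Rightarrow> (nat \<Rightarrow> 'a) \<Rightarrow> (nat \<Rightarrow> 'a) \<Rightarrow> bool" where
  "has_jfrac f b l \<longleftrightarrow> (jconv b l \<longlonglongrightarrow> f)"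

definition has_sfrac :: "'a::field fps \<Rightarrow> (nat \<Rightarrow> 'a) \<Rightarrow> bool" where
  "has_sfrac f a \<longleftrightarrow> (sconv a \<longlonglongrightarrow> f)"

end

theory Submission
  imports Defs
begin

unbundle fps_syntax

lemma inv_diff:
  fixes Da Db :: "'a::field fps"
  assumes "Da $ 0 \<noteq> 0" "Db $ 0 \<noteq> 0"
  shows "inverse Da - inverse Db = inverse Da * inverse Db * (Db - Da)"
proof -
  have 1: "inverse Db * Db = 1" "inverse Da * Da = 1" using assms by auto
  have "inverse Da * inverse Db * (Db - Da) = inverse Da * (inverse Db * Db) - inverse Db * (inverse Da * Da)"
    by (simp add: algebra_simps)
  also have "\<dots> = inverse Da - inverse Db" using 1 by simp
  finally show ?thesis by simp
qed

lemma const0_J: "(1 - fps_const c * fps_X - fps_const d * fps_X ^ 2 * (A :: 'a::field fps)) $ 0 = 1"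
  by (simp add: power2_eq_square)

lemma const0_S: "(1 - fps_const c * fps_X * (A :: 'a::field fps)) $ 0 = 1"
  by simp

lemma jstep:
  fixes A B :: "'a::field fps"
  assumes "A - B = fps_X ^ N * C"
  shows "\<exists>C'. inverse (1 - fps_const c * fps_X - fps_const d * fps_X ^ 2 * A)
     - inverse (1 - fps_const c * fps_X - fps_const d * fps_X ^ 2 * B) = fps_X ^ (N + 2) * C'"
proof -
  let ?Da = "1 - fps_const c * fps_X - fps_const d * fps_X ^ 2 * A"
  let ?Db = "1 - fps_const c * fps_X - fps_const d * fps_X ^ 2 * B"
  have "inverse ?Da - inverse ?Db = inverse ?Da * inverse ?Db * (?Db - ?Da)"
    by (rule inv_diff) (simp_all add: const0_J)
  also have "?Db - ?Da = fps_const d * fps_X ^ 2 * (A - B)" by (simp add: algebra_simps)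
  also have "\<dots> = fps_const d * fps_X ^ 2 * (fps_X ^ N * C)" by (simp only: assms)
  also have "\<dots> = fps_X ^ (N + 2) * (fps_const d * C)" by (simp only: power_add power_one_right mult_ac)
  finally have eq: "inverse ?Da - inverse ?Db = inverse ?Da * inverse ?Db * (fps_X ^ (N + 2) * (fps_const d * C))" .
  have "inverse ?Da * inverse ?Db * (fps_X ^ (N + 2) * (fps_const d * C)) = fps_X ^ (N + 2) * (inverse ?Da * inverse ?Db * (fps_const d * C))"
    by (simp only: mult_ac)
  with eq show ?thesis by (intro exI[where x="inverse ?Da * inverse ?Db * (fps_const d * C)"]) simp
qed

lemma sstep:
  fixes A B :: "'a::field fps"
  assumes "A - B = fps_X ^ N * C"
  shows "\<exists>C'. inverse (1 - fps_const c * fps_X * A)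
     - inverse (1 - fps_const c * fps_X * B) = fps_X ^ (N + 1) * C'"
proof -
  let ?Da = "1 - fps_const c * fps_X * A"
  let ?Db = "1 - fps_const c * fps_X * B"
  have "inverse ?Da - inverse ?Db = inverse ?Da * inverse ?Db * (?Db - ?Da)"
    by (rule inv_diff) (simp_all add: const0_S)
  also have "?Db - ?Da = fps_const c * fps_X * (A - B)" by (simp add: algebra_simps)
  also have "\<dots> = fps_const c * fps_X * (fps_X ^ N * C)" by (simp only: assms)
  also have "\<dots> = fps_X ^ (N + 1) * (fps_const c * C)" by (simp only: power_add power_one_right mult_ac)
  finally have eq: "inverse ?Da - inverse ?Db = inverse ?Da * inverse ?Db * (fps_X ^ (N + 1) * (fps_const c * C))" .
  have "inverse ?Da * inverse ?Db * (fps_X ^ (N + 1) * (fps_const c * C)) = fps_X ^ (N + 1) * (inverse ?Da * inverse ?Db * (fps_const c * C))"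
    by (simp only: mult_ac)
  with eq show ?thesis by (intro exI[where x="inverse ?Da * inverse ?Db * (fps_const c * C)"]) simp
qed

lemma jlim:
  fixes U :: "nat \<Rightarrow> 'a::field fps"
  assumes U: "\<And>k. U k = inverse (1 - fps_const (be k) * fps_X - fps_const (la (Suc k)) * fps_X ^ 2 * U (Suc k))"
  shows "\<exists>C. inverse (jden be la k m) - U k = fps_X ^ (2 * m + 2) * C"
proof (induction m arbitrary: k)
  case 0
  have "1 - fps_const (be k) * fps_X = 1 - fps_const (be k) * fps_X - fps_const (la (Suc k)) * fps_X ^ 2 * 0"
    by simp
  moreover have "(0::'a fps) - U (Suc k) = fps_X ^ 0 * (- U (Suc k))" by simp
  ultimately show ?case using jstep[of 0 "U (Suc k)" 0 "- U (Suc k)" "be k" "la (Suc k)"] U[of k]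
    by simp
next
  case (Suc m)
  then obtain C where "inverse (jden be la (Suc k) m) - U (Suc k) = fps_X ^ (2 * m + 2) * C" by blast
  from jstep[OF this, of "be k" "la (Suc k)"] show ?case using U[of k]
    by (simp add: algebra_simps)
qed

lemma slim:
  fixes V :: "nat \<Rightarrow> 'a::field fps"
  assumes V: "\<And>k. V k = inverse (1 - fps_const (a k) * fps_X * V (Suc k))"
  shows "\<exists>C. inverse (sden a k m) - V k = fps_X ^ (m + 1) * C"
proof (induction m arbitrary: k)
  case 0
  have "1 - fps_const (a k) * fps_X = 1 - fps_const (a k) * fps_X * 1"
    by simp
  moreover have "(1::'a fps) - V (Suc k) = fps_X ^ 0 * (1 - V (Suc k))" by simp
  ultimately show ?case using sstep[of 1 "V (Suc k)" 0 "1 - V (Suc k)" "a k"] V[of k]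
    by simp
next
  case (Suc m)
  then obtain C where "inverse (sden a (Suc k) m) - V (Suc k) = fps_X ^ (m + 1) * C" by blast
  from sstep[OF this, of "a k"] show ?case using V[of k]
    by (simp add: algebra_simps)
qed

lemma conv_from:
  fixes g :: "nat \<Rightarrow> 'a::ring_1 fps"
  assumes "\<And>m. \<exists>C. g m - f = fps_X ^ (h m) * C" and "\<And>m. m < h m"
  shows "g \<longlonglongrightarrow> f"
proof (rule tendsto_fpsI)
  fix n
  show "eventually (\<lambda>m. g m $ n = f $ n) sequentially"
    unfolding eventually_sequentially
  proof (intro exI allI impI)
    fix m assume "n \<le> m"
    with assms(2)[of m] have lt: "n < h m" by simp
    obtain C where "g m - f = fps_X ^ (h m) * C" using assms(1) by blast
    hence "(g m - f) $ n = 0" using lt by (simp add: fps_X_power_mult_nth)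
    thus "g m $ n = f $ n" by simp
  qed
qed

lemma ratio_J:
  fixes P :: "nat \<Rightarrow> 'a::field fps"
  assumes nz: "\<And>k. P k $ 0 \<noteq> 0"
    and rec: "\<And>k. P k = (1 - fps_const (c k) * fps_X) * P (Suc k) - fps_const (d (Suc k)) * fps_X ^ 2 * P (Suc (Suc k))"
  shows "P (Suc k) * inverse (P k) = inverse (1 - fps_const (c k) * fps_X - fps_const (d (Suc k)) * fps_X ^ 2 * (P (Suc (Suc k)) * inverse (P (Suc k))))"
proof -
  let ?R = "1 - fps_const (c k) * fps_X - fps_const (d (Suc k)) * fps_X ^ 2 * (P (Suc (Suc k)) * inverse (P (Suc k)))"
  have i1: "inverse (P (Suc k)) * P (Suc k) = 1" using nz by auto
  have "?R * P (Suc k) = (1 - fps_const (c k) * fps_X) * P (Suc k) - fps_const (d (Suc k)) * fps_X ^ 2 * P (Suc (Suc k)) * (inverse (P (Suc k)) * P (Suc k))"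
    by (simp add: algebra_simps)
  also have "\<dots> = P k" using i1 rec[of k] by simp
  finally have "?R * P (Suc k) * inverse (P (Suc k)) = P k * inverse (P (Suc k))" by simp
  moreover have "?R * P (Suc k) * inverse (P (Suc k)) = ?R"
    by (simp only: mult.assoc inverse_mult_eq_1'[OF nz] mult_1_right)
  ultimately have "?R = P k * inverse (P (Suc k))" by simp
  hence "inverse ?R = inverse (P k) * P (Suc k)" using nz by (simp add: fps_inverse_mult)
  thus ?thesis by (simp add: mult.commute)
qed

lemma ratio_S:
  fixes P :: "nat \<Rightarrow> 'a::field fps"
  assumes nz: "\<And>k. P k $ 0 \<noteq> 0"
    and rec: "\<And>k. P k = P (Suc k) - fps_const (c k) * fps_X * P (Suc (Suc k))"
  shows "P (Suc k) * inverse (P k) = inverse (1 - fps_const (c k) * fps_X * (P (Suc (Suc k)) * inverse (P (Suc k))))"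
proof -
  let ?R = "1 - fps_const (c k) * fps_X * (P (Suc (Suc k)) * inverse (P (Suc k)))"
  have i1: "inverse (P (Suc k)) * P (Suc k) = 1" using nz by auto
  have "?R * P (Suc k) = P (Suc k) - fps_const (c k) * fps_X * P (Suc (Suc k)) * (inverse (P (Suc k)) * P (Suc k))"
    by (simp add: algebra_simps)
  also have "\<dots> = P k" using i1 rec[of k] by simp
  finally have "?R * P (Suc k) * inverse (P (Suc k)) = P k * inverse (P (Suc k))" by simp
  moreover have "?R * P (Suc k) * inverse (P (Suc k)) = ?R"
    by (simp only: mult.assoc inverse_mult_eq_1'[OF nz] mult_1_right)
  ultimately have "?R = P k * inverse (P (Suc k))" by simp
  hence "inverse ?R = inverse (P k) * P (Suc k)" using nz by (simp add: fps_inverse_mult)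
  thus ?thesis by (simp add: mult.commute)
qed

definition aa :: "nat \<Rightarrow> rat" where "aa n = 2 ^ (n * (n + 3) div 2)"
definition QQ :: "nat \<Rightarrow> nat \<Rightarrow> rat" where "QQ n j = (\<Prod>i<j. 2 ^ (n + i + 1) - 1)"
definition DD :: "nat \<Rightarrow> rat" where "DD j = (\<Prod>i<j. 2 ^ (i + 1) - 1)"
definition GG :: "nat \<Rightarrow> nat \<Rightarrow> rat" where "GG n j = QQ n j / DD j"
definition ee :: "nat \<Rightarrow> nat \<Rightarrow> rat" where "ee k n = 2 ^ ((k + 1) div 2 * n) * GG n (k div 2)"
definition bb :: "nat \<Rightarrow> rat" where "bb n = 2 ^ (n + 2) - 2 ^ ((n + 1) div 2) * (1 - (-1) ^ n)"

fun Hs :: "nat \<Rightarrow> rat fps" where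
  "Hs 0 = 1"
| "Hs (Suc k) = Abs_fps (\<lambda>n. aa n * ee k n)"

lemma pow2_gt1: "(2::rat) ^ Suc i \<noteq> 1"
proof -
  have "(1::rat) < 2 ^ Suc i" by (rule one_less_power) auto
  thus ?thesis by simp
qed

lemma aa_Suc: "aa (Suc n) = 2 ^ (n + 2) * aa n"
proof -
  have "Suc n * (Suc n + 3) = n * (n + 3) + 2 * (n + 2)" by (simp add: algebra_simps)
  hence "Suc n * (Suc n + 3) div 2 = n * (n + 3) div 2 + (n + 2)" by simp
  thus ?thesis unfolding aa_def by (simp add: power_add)
qed

lemma aa0: "aa 0 = 1" by (simp add: aa_def)

lemma DD_nz: "DD j \<noteq> 0"
  unfolding DD_def using pow2_gt1 by (simp add: prod_zero_iff)

lemma DD_Suc: "DD (Suc j) = DD j * (2 ^ (j + 1) - 1)"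
  unfolding DD_def by simp

lemma QQ_Suc: "QQ n (Suc j) = QQ n j * (2 ^ (n + j + 1) - 1)"
  unfolding QQ_def by simp

lemma QQ_Suc_left: "QQ n (Suc j) = (2 ^ (n + 1) - 1) * QQ (Suc n) j"
  unfolding QQ_def prod.lessThan_Suc_shift by simp

lemma GG0: "GG 0 j = 1"
  using DD_nz[of j] by (simp add: GG_def QQ_def DD_def)

lemma GG_0: "GG n 0 = 1"
  by (simp add: GG_def QQ_def DD_def)

lemma I1: "GG (Suc n) j * (2 ^ (n + 1) - 1) = (2 ^ (j + 1) - 1) * GG n (Suc j)"
proof -
  have nz: "(2::rat) ^ (j + 1) - 1 \<noteq> 0" using pow2_gt1[of j] by simp
  show ?thesis unfolding GG_def QQ_Suc_left DD_Suc using DD_nz[of j] nz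
    by (simp add: field_simps)
qed

lemma I2: "GG (Suc n) (Suc j) - GG (Suc n) j = 2 ^ (j + 1) * GG n (Suc j)"
proof -
  have nz: "(2::rat) ^ (j + 1) - 1 \<noteq> 0" using pow2_gt1[of j] by simp
  have p: "(2::rat) ^ (Suc n + j + 1) = 2 ^ (j + 1) * 2 ^ (n + 1)" by (simp add: power_add[symmetric])
  have q1: "QQ n (Suc j) = (2 ^ (n + 1) - 1) * QQ (Suc n) j" by (rule QQ_Suc_left)
  have q2: "QQ (Suc n) (Suc j) = QQ (Suc n) j * (2 ^ (Suc n + j + 1) - 1)" by (rule QQ_Suc)
  show ?thesis unfolding GG_def q1 q2 DD_Suc p using DD_nz[of j] nz
    by (simp add: field_simps)
qed


lemma bb_odd: "bb (2 * j + 1) = 2 ^ (j + 2) * (2 ^ (j + 1) - 1)"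
proof -
  have "(2 * j + 1 + 1) div 2 = j + 1" by simp
  moreover have "(2::rat) ^ (2 * j + 1 + 2) = 2 ^ (j + 2) * 2 ^ (j + 1)"
    by (simp add: power_add[symmetric])
  ultimately show ?thesis unfolding bb_def by (simp add: algebra_simps)
qed

lemma bb_even: "bb (2 * j) = 2 ^ (2 * j + 2)"
  unfolding bb_def by simp

lemma ee_rec: "2 ^ (n + 2) * (ee (Suc k) (Suc n) - ee k (Suc n)) = bb (Suc k) * ee (Suc (Suc k)) n"
proof -
  have "k = 2 * (k div 2) \<or> k = 2 * (k div 2) + 1" by presburger
  then obtain j where "k = 2 * j \<or> k = 2 * j + 1" by blast
  then show ?thesis
  proof
    assume k: "k = 2 * j"
    have e1: "ee (Suc k) (Suc n) = 2 ^ (j * (n + 1)) * 2 ^ (n + 1) * GG (Suc n) j"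
      unfolding ee_def k by (simp add: power_add[symmetric] algebra_simps)
    have e2: "ee k (Suc n) = 2 ^ (j * (n + 1)) * GG (Suc n) j"
      unfolding ee_def k by simp
    have e3: "ee (Suc (Suc k)) n = 2 ^ ((j + 1) * n) * GG n (Suc j)"
      unfolding ee_def k by simp
    have b: "bb (Suc k) = 2 ^ (j + 2) * (2 ^ (j + 1) - 1)" using bb_odd[of j] k by simp
    have p: "(2::rat) ^ (n + 2) * 2 ^ (j * (n + 1)) = 2 ^ (j + 2) * 2 ^ ((j + 1) * n)"
      by (simp add: power_add[symmetric] algebra_simps)
    have "2 ^ (n + 2) * (ee (Suc k) (Suc n) - ee k (Suc n))
        = 2 ^ (n + 2) * 2 ^ (j * (n + 1)) * (GG (Suc n) j * (2 ^ (n + 1) - 1))"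
      unfolding e1 e2 by (simp add: algebra_simps)
    also have "\<dots> = 2 ^ (j + 2) * 2 ^ ((j + 1) * n) * ((2 ^ (j + 1) - 1) * GG n (Suc j))"
      unfolding I1 p ..
    also have "\<dots> = bb (Suc k) * ee (Suc (Suc k)) n"
      unfolding b e3 by (simp add: algebra_simps)
    finally show ?thesis .
  next
    assume k: "k = 2 * j + 1"
    have e1: "ee (Suc k) (Suc n) = 2 ^ ((j + 1) * (n + 1)) * GG (Suc n) (Suc j)"
      unfolding ee_def k by simp
    have e2: "ee k (Suc n) = 2 ^ ((j + 1) * (n + 1)) * GG (Suc n) j"
      unfolding ee_def k by simp
    have e3: "ee (Suc (Suc k)) n = 2 ^ ((j + 2) * n) * GG n (Suc j)"
      unfolding ee_def k by simp
    have b: "bb (Suc k) = 2 ^ (2 * j + 4)" using bb_even[of "j + 1"] k by (simp add: algebra_simps power_add)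
    have ex: "n + 2 + (j + 1) * (n + 1) + (j + 1) = 2 * j + 4 + (j + 2) * n" by (simp add: algebra_simps)
    have p: "(2::rat) ^ (n + 2) * 2 ^ ((j + 1) * (n + 1)) * 2 ^ (j + 1) = 2 ^ (2 * j + 4) * 2 ^ ((j + 2) * n)"
      by (simp only: power_add[symmetric] ex)
    have "2 ^ (n + 2) * (ee (Suc k) (Suc n) - ee k (Suc n))
        = 2 ^ (n + 2) * 2 ^ ((j + 1) * (n + 1)) * (GG (Suc n) (Suc j) - GG (Suc n) j)"
      unfolding e1 e2 by (simp add: algebra_simps)
    also have "\<dots> = 2 ^ (n + 2) * 2 ^ ((j + 1) * (n + 1)) * 2 ^ (j + 1) * GG n (Suc j)"
      unfolding I2 by (simp add: algebra_simps)
    also have "\<dots> = bb (Suc k) * ee (Suc (Suc k)) n"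
      unfolding p b e3 by (simp add: algebra_simps)
    finally show ?thesis .
  qed
qed

lemma ee_0: "ee k 0 = 1"
  by (simp add: ee_def GG0)

lemma ee0: "ee 0 n = 1"
  by (simp add: ee_def GG_0)

lemma ee1: "ee (Suc 0) n = 2 ^ n"
  by (simp add: ee_def GG_0)

lemma Hs_nz: "Hs k $ 0 \<noteq> 0"
  by (cases k) (simp_all add: aa0 ee_0)

lemma X_nth: "(fps_const c * fps_X * (H :: rat fps)) $ n = (if n = 0 then 0 else c * H $ (n - 1))"
  by (simp add: mult.assoc fps_X_mult_nth)

lemma Hs_rec: "Hs k = Hs (Suc k) - fps_const (bb k) * fps_X * Hs (Suc (Suc k))"
proof (rule fps_ext)
  fix n
  show "Hs k $ n = (Hs (Suc k) - fps_const (bb k) * fps_X * Hs (Suc (Suc k))) $ n"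
  proof (cases k)
    case 0
    show ?thesis
    proof (cases n)
      case 0 thus ?thesis using \<open>k = 0\<close> by (simp add: aa0 ee0 X_nth)
    next
      case (Suc m)
      have "bb 0 = 4" by (simp add: bb_def)
      thus ?thesis using \<open>k = 0\<close> Suc by (simp add: aa_Suc ee0 ee1 X_nth power_add)
    qed
  next
    case (Suc k')
    show ?thesis
    proof (cases n)
      case 0 thus ?thesis using Suc by (simp add: ee_0 X_nth)
    next
      case (Suc m)
      have "aa (Suc m) * ee k' (Suc m) = aa (Suc m) * ee (Suc k') (Suc m) - bb (Suc k') * (aa m * ee (Suc (Suc k')) m)"
      proof -
        have "aa (Suc m) * (ee (Suc k') (Suc m) - ee k' (Suc m)) = aa m * (2 ^ (m + 2) * (ee (Suc k') (Suc m) - ee k' (Suc m)))"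
          by (simp add: aa_Suc)
        also have "\<dots> = bb (Suc k') * (aa m * ee (Suc (Suc k')) m)" unfolding ee_rec by simp
        finally show ?thesis by (simp add: algebra_simps)
      qed
      thus ?thesis using \<open>k = Suc k'\<close> Suc by (simp add: X_nth)
    qed
  qed
qed


lemma three:
  fixes A B C D E :: "rat fps"
  assumes E1: "A = B - fps_const p * fps_X * C" and E2: "B = C - fps_const q * fps_X * D"
    and E3: "C = D - fps_const r * fps_X * E"
  shows "A = (1 - fps_const (p + q) * fps_X) * C - fps_const (q * r) * fps_X ^ 2 * E"
proof -
  have D: "D = C + fps_const r * fps_X * E" using E3 by simp
  show ?thesis unfolding E1 E2 D
    by (simp add: algebra_simps power2_eq_square flip: fps_const_add fps_const_mult)
qed

lemma two:
  fixes A B C D :: "rat fps"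
  assumes E1: "A = B - fps_const p * fps_X * C" and E2: "B = C - fps_const q * fps_X * D"
  shows "A = (1 - fps_const p * fps_X) * B - fps_const (p * q) * fps_X ^ 2 * D"
proof -
  have C: "C = B + fps_const q * fps_X * D" using E2 by simp
  show ?thesis unfolding E1 C
    by (simp add: algebra_simps power2_eq_square flip: fps_const_mult)
qed

definition Hj :: "nat \<Rightarrow> rat fps" where "Hj k = (if k = 0 then 1 else Hs (2 * k - 1))"

lemma Hj_nz: "Hj k $ 0 \<noteq> 0"
  by (simp add: Hj_def Hs_nz)

lemma Hj_rec:
  fixes beta lam :: "nat \<Rightarrow> rat"
  assumes be: "\<And>k. beta (Suc k) = bb (2 * k + 1) + bb (2 * k + 2)" "beta 0 = bb 0"
    and la: "\<And>k. lam (Suc k) = bb (2 * k) * bb (2 * k + 1)"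
  shows "Hj k = (1 - fps_const (beta k) * fps_X) * Hj (Suc k) - fps_const (lam (Suc k)) * fps_X ^ 2 * Hj (Suc (Suc k))"
proof (cases k)
  case 0
  have "Hs 0 = (1 - fps_const (bb 0) * fps_X) * Hs (Suc 0) - fps_const (bb 0 * bb (Suc 0)) * fps_X ^ 2 * Hs (Suc (Suc (Suc 0)))"
    by (rule two[OF Hs_rec[of 0] Hs_rec[of "Suc 0"]])
  thus ?thesis using 0 be(2) la[of 0] by (simp add: Hj_def numeral_eq_Suc)
next
  case (Suc k')
  have g: "Hs m = (1 - fps_const (bb m + bb (Suc m)) * fps_X) * Hs (Suc (Suc m))
      - fps_const (bb (Suc m) * bb (Suc (Suc m))) * fps_X ^ 2 * Hs (Suc (Suc (Suc (Suc m))))" for m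
    by (rule three[OF Hs_rec[of m] Hs_rec[of "Suc m"] Hs_rec[of "Suc (Suc m)"]])
  have "Hs (2 * k' + 1) = (1 - fps_const (bb (2 * k' + 1) + bb (2 * k' + 2)) * fps_X) * Hs (2 * k' + 3)
      - fps_const (bb (2 * k' + 2) * bb (2 * k' + 3)) * fps_X ^ 2 * Hs (2 * k' + 5)"
    using g[of "2 * k' + 1"] by (simp add: numeral_eq_Suc)
  moreover have "2 * (k' + 1) = 2 * k' + 2" "2 * (k' + 1) + 1 = 2 * k' + 3" by simp_all
  ultimately show ?thesis using Suc be(1)[of k'] la[of "Suc k'"]
    by (simp add: Hj_def numeral_eq_Suc)
qed


lemma pw: "(2::rat) ^ (a * k + c) = (2 ^ k) ^ a * 2 ^ c"
  by (metis power_add power_mult mult.commute)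

lemma beta_num: "(2::rat) ^ (Suc k + 1) * (2 ^ (Suc k + 1) + 2 ^ Suc k - 1) = bb (2 * k + 1) + bb (2 * k + 2)"
proof -
  have "bb (2 * k + 2) = bb (2 * (k + 1))" by simp
  hence e: "bb (2 * k + 2) = 2 ^ (2 * k + 4)" using bb_even[of "k + 1"] by (simp add: algebra_simps power_add)
  show ?thesis unfolding bb_odd e
    using pw[of 2 k 4] pw[of 1 k 2] pw[of 1 k 1] pw[of 1 k 3]
    by (simp add: algebra_simps power2_eq_square)
qed

lemma lam_num: "(2::rat) ^ (3 * Suc k + 1) * (2 ^ Suc k - 1) = bb (2 * k) * bb (2 * k + 1)"
  unfolding bb_odd bb_even
  using pw[of 3 k 4] pw[of 2 k 2] pw[of 1 k 2] pw[of 1 k 1] pw[of 1 k 4]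
  by (simp add: algebra_simps power2_eq_square power3_eq_cube)

theorem mainTheorem4:
  fixes F :: "rat fps" and beta lam b :: "nat \<Rightarrow> rat"
  assumes "F = Abs_fps (\<lambda>n. 2 ^ (n * (n + 3) div 2))"
      and "\<And>n. beta n = 2 ^ (n + 1) * (2 ^ (n + 1) + 2 ^ n - 1)"
      and "\<And>n. lam n = 2 ^ (3 * n + 1) * (2 ^ n - 1)"
      and "\<And>n. b n = 2 ^ (n + 2) - 2 ^ ((n + 1) div 2) * (1 - (-1) ^ n)"
  shows "has_jfrac F beta lam \<and> has_sfrac F b"
proof
  have Fe: "F = Hs 1" using assms(1) by (simp add: aa_def ee0)
  have bfun: "b = bb" by (rule ext) (simp add: assms(4) bb_def)
  show "has_sfrac F b"
  proof -
    define V where "V k = Hs (Suc k) * inverse (Hs k)" for k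
    have V: "V k = inverse (1 - fps_const (bb k) * fps_X * V (Suc k))" for k
      unfolding V_def by (rule ratio_S[where P=Hs and c=bb, OF Hs_nz Hs_rec])
    have V0: "V 0 = F" by (simp add: V_def Fe)
    have "sconv bb \<longlonglongrightarrow> F"
    proof (rule conv_from)
      show "\<exists>C. sconv bb m - F = fps_X ^ (m + 1) * C" for m
        using slim[of V bb 0 m, OF V] unfolding sconv_def V0 .
    qed simp
    thus ?thesis unfolding has_sfrac_def bfun .
  qed
  show "has_jfrac F beta lam"
  proof -
    have be: "\<And>k. beta (Suc k) = bb (2 * k + 1) + bb (2 * k + 2)" "beta 0 = bb 0"
      using assms(2) beta_num by (simp_all add: bb_def)
    have la: "\<And>k. lam (Suc k) = bb (2 * k) * bb (2 * k + 1)"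
      unfolding assms(3) by (rule lam_num)
    define U where "U k = Hj (Suc k) * inverse (Hj k)" for k
    have U: "U k = inverse (1 - fps_const (beta k) * fps_X - fps_const (lam (Suc k)) * fps_X ^ 2 * U (Suc k))" for k
      unfolding U_def by (rule ratio_J[where P=Hj and c=beta and d=lam, OF Hj_nz Hj_rec[OF be la]])
    have U0: "U 0 = F" by (simp add: U_def Fe Hj_def)
    have "jconv beta lam \<longlonglongrightarrow> F"
    proof (rule conv_from)
      show "\<exists>C. jconv beta lam m - F = fps_X ^ (2 * m + 2) * C" for m
        using jlim[of U beta lam 0 m, OF U] unfolding jconv_def U0 .
    qed simp
    thus ?thesis unfolding has_jfrac_def .
  qed
qed

end
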